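(* Let $A$ be a skew brace. Then $\mathrm{Spec}\,A$ (with the spectral topology) is irreducible if and only if $\mathrm{Nil}\,A$ is a prime ideal.
   Context: A (left) skew brace is a triple $(A,+,\circ)$ where $(A,+)$ and $(A,\circ)$ are groups such that $a\circ(b+c)=a\circ b-a+a\circ c$ for all $a,b,c$; common identity $e$. Put $\lambda_a(b)=-a+a\circ b$ and $a*b=-a+a\circ b-b$. An ideal is a normal subgroup $I$ of both $(A,+)$ and $(A,\circ)$ with $\lambda_a(I)\subseteq I$ for all $a$. A prime ideal is a proper ideal $P$ such that for any subsets $X,Y$ of $A$, $\{x*y\mid x\in X,y\in Y\}\subseteq P$ implies $X\subseteq P$ or $Y\subseteq P$; $\mathrm{Spec}\,A$ is the set of prime ideals, with the spectral topology whose closed sets are $H(I)=\{P\in\mathrm{Spec}\,A\mid I\subseteq P\}$, $I$ an ideal. $\mathrm{Nil}\,A$ is the intersection of all prime ideals of $A$. A space is irreducible if it is not the union of two proper closed subsets. *)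

theory Defs
  imports "HOL-Algebra.Group" "HOL-Algebra.Coset"
begin

text \<open>A skew brace is given by a carrier set A, the additive operation pl,
the multiplicative (circle) operation cm and the common identity e.\<close>

definition add_grp :: "'a set \<Rightarrow> ('a \<Rightarrow> 'a \<Rightarrow> 'a) \<Rightarrow> 'a \<Rightarrow> 'a monoid" where
  "add_grp A pl e = \<lparr>carrier = A, monoid.mult = pl, one = e\<rparr>"

definition circ_grp :: "'a set \<Rightarrow> ('a \<Rightarrow> 'a \<Rightarrow> 'a) \<Rightarrow> 'a \<Rightarrow> 'a monoid" where
  "circ_grp A cm e = \<lparr>carrier = A, monoid.mult = cm, one = e\<rparr>"

definition bneg :: "'a set \<Rightarrow> ('a \<Rightarrow> 'a \<Rightarrow> 'a) \<Rightarrow> 'a \<Rightarrow> 'a \<Rightarrow> 'a" where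
  "bneg A pl e a = inv\<^bsub>add_grp A pl e\<^esub> a"

definition skew_brace :: "'a set \<Rightarrow> ('a \<Rightarrow> 'a \<Rightarrow> 'a) \<Rightarrow> ('a \<Rightarrow> 'a \<Rightarrow> 'a) \<Rightarrow> 'a \<Rightarrow> bool" where
  "skew_brace A pl cm e \<longleftrightarrow>
     group (add_grp A pl e) \<and> group (circ_grp A cm e) \<and>
     (\<forall>a\<in>A. \<forall>b\<in>A. \<forall>c\<in>A. cm a (pl b c) = pl (pl (cm a b) (bneg A pl e a)) (cm a c))"

definition blam :: "'a set \<Rightarrow> ('a \<Rightarrow> 'a \<Rightarrow> 'a) \<Rightarrow> ('a \<Rightarrow> 'a \<Rightarrow> 'a) \<Rightarrow> 'a \<Rightarrow> 'a \<Rightarrow> 'a \<Rightarrow> 'a" where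
  "blam A pl cm e a b = pl (bneg A pl e a) (cm a b)"

definition bstar :: "'a set \<Rightarrow> ('a \<Rightarrow> 'a \<Rightarrow> 'a) \<Rightarrow> ('a \<Rightarrow> 'a \<Rightarrow> 'a) \<Rightarrow> 'a \<Rightarrow> 'a \<Rightarrow> 'a \<Rightarrow> 'a" where
  "bstar A pl cm e a b = pl (pl (bneg A pl e a) (cm a b)) (bneg A pl e b)"

definition brace_ideal :: "'a set \<Rightarrow> ('a \<Rightarrow> 'a \<Rightarrow> 'a) \<Rightarrow> ('a \<Rightarrow> 'a \<Rightarrow> 'a) \<Rightarrow> 'a \<Rightarrow> 'a set \<Rightarrow> bool" where
  "brace_ideal A pl cm e I \<longleftrightarrow>
     normal I (add_grp A pl e) \<and> normal I (circ_grp A cm e) \<and>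
     (\<forall>a\<in>A. blam A pl cm e a ` I \<subseteq> I)"

definition prime_ideal :: "'a set \<Rightarrow> ('a \<Rightarrow> 'a \<Rightarrow> 'a) \<Rightarrow> ('a \<Rightarrow> 'a \<Rightarrow> 'a) \<Rightarrow> 'a \<Rightarrow> 'a set \<Rightarrow> bool" where
  "prime_ideal A pl cm e P \<longleftrightarrow>
     brace_ideal A pl cm e P \<and> P \<noteq> A \<and>
     (\<forall>X Y. X \<subseteq> A \<longrightarrow> Y \<subseteq> A \<longrightarrow>
        {bstar A pl cm e x y | x y. x \<in> X \<and> y \<in> Y} \<subseteq> P \<longrightarrow> X \<subseteq> P \<or> Y \<subseteq> P)"

definition Spec :: "'a set \<Rightarrow> ('a \<Rightarrow> 'a \<Rightarrow> 'a) \<Rightarrow> ('a \<Rightarrow> 'a \<Rightarrow> 'a) \<Rightarrow> 'a \<Rightarrow> 'a set set" where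
  "Spec A pl cm e = {P. prime_ideal A pl cm e P}"

definition hull_H :: "'a set \<Rightarrow> ('a \<Rightarrow> 'a \<Rightarrow> 'a) \<Rightarrow> ('a \<Rightarrow> 'a \<Rightarrow> 'a) \<Rightarrow> 'a \<Rightarrow> 'a set \<Rightarrow> 'a set set" where
  "hull_H A pl cm e I = {P \<in> Spec A pl cm e. I \<subseteq> P}"

definition spec_closed :: "'a set \<Rightarrow> ('a \<Rightarrow> 'a \<Rightarrow> 'a) \<Rightarrow> ('a \<Rightarrow> 'a \<Rightarrow> 'a) \<Rightarrow> 'a \<Rightarrow> 'a set set \<Rightarrow> bool" where
  "spec_closed A pl cm e C \<longleftrightarrow> (\<exists>I. brace_ideal A pl cm e I \<and> C = hull_H A pl cm e I)"

text \<open>Nil A: intersection of all prime ideals (inside A; equals A if there are none).\<close>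
definition Nil_brace :: "'a set \<Rightarrow> ('a \<Rightarrow> 'a \<Rightarrow> 'a) \<Rightarrow> ('a \<Rightarrow> 'a \<Rightarrow> 'a) \<Rightarrow> 'a \<Rightarrow> 'a set" where
  "Nil_brace A pl cm e = {a \<in> A. \<forall>P \<in> Spec A pl cm e. a \<in> P}"

definition spec_irreducible :: "'a set \<Rightarrow> ('a \<Rightarrow> 'a \<Rightarrow> 'a) \<Rightarrow> ('a \<Rightarrow> 'a \<Rightarrow> 'a) \<Rightarrow> 'a \<Rightarrow> bool" where
  "spec_irreducible A pl cm e \<longleftrightarrow>
     Spec A pl cm e \<noteq> {} \<and>
     \<not> (\<exists>C1 C2. spec_closed A pl cm e C1 \<and> spec_closed A pl cm e C2 \<and>
              C1 \<subset> Spec A pl cm e \<and> C2 \<subset> Spec A pl cm e \<and>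
              Spec A pl cm e = C1 \<union> C2)"

end

theory Submission
  imports Defs
begin

lemma normal_Inter_gen:
  assumes G: "group G" and F: "F \<noteq> {}" and N: "\<And>N. N \<in> F \<Longrightarrow> N \<lhd> G"
  shows "\<Inter>F \<lhd> G"
proof -
  interpret group G by (rule G)
  have "subgroup (\<Inter>F) G" using subgroups_Inter[of F] F N normal_imp_subgroup by blast
  moreover have "\<forall>x \<in> carrier G. \<forall>h \<in> \<Inter>F. x \<otimes>\<^bsub>G\<^esub> h \<otimes>\<^bsub>G\<^esub> inv\<^bsub>G\<^esub> x \<in> \<Inter>F"
    using N normal.inv_op_closed2 by fastforce
  ultimately show ?thesis by (simp add: normal_inv_iff)
qed

lemma normal_self_gen:
  assumes G: "group G" shows "carrier G \<lhd> G"
proof -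
  interpret group G by (rule G)
  show ?thesis by (simp add: normal_inv_iff subgroup_self)
qed

lemma ideal_Inter:
  assumes F: "F \<noteq> {}" and N: "\<And>I. I \<in> F \<Longrightarrow> brace_ideal A pl cm e I"
  shows "brace_ideal A pl cm e (\<Inter>F)"
proof -
  have N1: "normal I (add_grp A pl e)" and N2: "normal I (circ_grp A cm e)"
    and N3: "\<forall>a\<in>A. blam A pl cm e a ` I \<subseteq> I" if "I \<in> F" for I
    using N[OF that] unfolding brace_ideal_def by simp_all
  obtain I0 where I0: "I0 \<in> F" using F by blast
  have g1: "group (add_grp A pl e)" using N1[OF I0] by (simp add: normal_def)
  have g2: "group (circ_grp A cm e)" using N2[OF I0] by (simp add: normal_def)
  have "\<Inter>F \<lhd> add_grp A pl e"
    by (rule normal_Inter_gen[OF g1 F N1])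
  moreover have "\<Inter>F \<lhd> circ_grp A cm e"
    by (rule normal_Inter_gen[OF g2 F N2])
  moreover have "\<forall>a\<in>A. blam A pl cm e a ` \<Inter>F \<subseteq> \<Inter>F"
  proof (intro ballI subsetI)
    fix a x assume a: "a \<in> A" and x: "x \<in> blam A pl cm e a ` \<Inter>F"
    then obtain b where b: "b \<in> \<Inter>F" and xb: "x = blam A pl cm e a b" by blast
    show "x \<in> \<Inter>F"
    proof
      fix I assume I: "I \<in> F"
      have "b \<in> I" using b I by blast
      then show "x \<in> I" using N3[OF I] a xb by blast
    qed
  qed
  ultimately show ?thesis unfolding brace_ideal_def by simp
qed

lemma ideal_self:
  assumes "skew_brace A pl cm e"
  shows "brace_ideal A pl cm e A"
proof -
  have g1: "group (add_grp A pl e)" and g2: "group (circ_grp A cm e)"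
    using assms unfolding skew_brace_def by simp_all
  have "A \<lhd> add_grp A pl e" using normal_self_gen[OF g1] by (simp add: add_grp_def)
  moreover have "A \<lhd> circ_grp A cm e" using normal_self_gen[OF g2] by (simp add: circ_grp_def)
  moreover have "\<forall>a\<in>A. blam A pl cm e a ` A \<subseteq> A"
  proof (intro ballI subsetI)
    fix a x assume a: "a \<in> A" and "x \<in> blam A pl cm e a ` A"
    then obtain b where b: "b \<in> A" and x: "x = blam A pl cm e a b" by blast
    have c1: "cm a b \<in> A"
      using monoid.m_closed[OF group.is_monoid[OF g2], of a b] a b by (simp add: circ_grp_def)
    have c2: "bneg A pl e a \<in> A"
      using group.inv_closed[OF g1, of a] a by (simp add: add_grp_def bneg_def)
    have "pl (bneg A pl e a) (cm a b) \<in> A"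
      using monoid.m_closed[OF group.is_monoid[OF g1], of "bneg A pl e a" "cm a b"] c1 c2
      by (simp add: add_grp_def)
    then show "x \<in> A" by (simp add: x blam_def)
  qed
  ultimately show ?thesis unfolding brace_ideal_def by simp
qed

lemma ideal_sub:
  assumes "brace_ideal A pl cm e I" shows "I \<subseteq> A"
proof -
  have "subgroup I (add_grp A pl e)" using assms unfolding brace_ideal_def
    by (simp add: normal_imp_subgroup)
  then show ?thesis using subgroup.subset by (fastforce simp: add_grp_def)
qed

theorem proposition4p13:
  fixes A :: "'a set" and pl cm :: "'a \<Rightarrow> 'a \<Rightarrow> 'a" and e :: 'a
  assumes "skew_brace A pl cm e"
  shows "spec_irreducible A pl cm e \<longleftrightarrow> prime_ideal A pl cm e (Nil_brace A pl cm e)"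
proof
  assume irr: "spec_irreducible A pl cm e"
  let ?S = "Spec A pl cm e"
  let ?N = "Nil_brace A pl cm e"
  have Sne: "?S \<noteq> {}" using irr unfolding spec_irreducible_def by (elim conjE)
  have Psub: "P \<subseteq> A" if "P \<in> ?S" for P
  proof -
    have "brace_ideal A pl cm e P" using that unfolding Spec_def prime_ideal_def by simp
    then show ?thesis by (rule ideal_sub)
  qed
  have Neq: "?N = \<Inter>?S"
  proof
    show "?N \<subseteq> \<Inter>?S" unfolding Nil_brace_def by blast
    show "\<Inter>?S \<subseteq> ?N"
    proof
      fix a assume a: "a \<in> \<Inter>?S"
      obtain P where P: "P \<in> ?S" using Sne by blast
      have "a \<in> A" using a P Psub[OF P] by blast
      then show "a \<in> ?N" using a unfolding Nil_brace_def by blast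
    qed
  qed
  have Nid: "brace_ideal A pl cm e ?N"
    unfolding Neq by (rule ideal_Inter[OF Sne]) (auto simp: Spec_def prime_ideal_def)
  have Nne: "?N \<noteq> A"
  proof -
    obtain P where P: "P \<in> ?S" using Sne by blast
    then have "P \<noteq> A" by (simp add: Spec_def prime_ideal_def)
    moreover have "?N \<subseteq> P" using Neq P by blast
    ultimately show ?thesis using Psub[OF P] by blast
  qed
  define gen where "gen X = \<Inter>{I. brace_ideal A pl cm e I \<and> X \<subseteq> I}" for X
  have gen_id: "brace_ideal A pl cm e (gen X)" if "X \<subseteq> A" for X
    unfolding gen_def
  proof (rule ideal_Inter)
    show "{I. brace_ideal A pl cm e I \<and> X \<subseteq> I} \<noteq> {}" using ideal_self[OF assms] that by blast
  qed auto
  have gen_sub: "X \<subseteq> gen X" for X unfolding gen_def by blast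
  have gen_le: "gen X \<subseteq> P" if "brace_ideal A pl cm e P" "X \<subseteq> P" for X P
    unfolding gen_def using that by blast
  have "\<forall>X Y. X \<subseteq> A \<longrightarrow> Y \<subseteq> A \<longrightarrow>
        {bstar A pl cm e x y | x y. x \<in> X \<and> y \<in> Y} \<subseteq> ?N \<longrightarrow> X \<subseteq> ?N \<or> Y \<subseteq> ?N"
  proof (intro allI impI)
    fix X Y assume X: "X \<subseteq> A" and Y: "Y \<subseteq> A"
      and XY: "{bstar A pl cm e x y | x y. x \<in> X \<and> y \<in> Y} \<subseteq> ?N"
    have cov: "?S = hull_H A pl cm e (gen X) \<union> hull_H A pl cm e (gen Y)"
    proof
      show "?S \<subseteq> hull_H A pl cm e (gen X) \<union> hull_H A pl cm e (gen Y)"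
      proof
        fix P assume P: "P \<in> ?S"
        then have pp: "prime_ideal A pl cm e P" by (simp add: Spec_def)
        have "{bstar A pl cm e x y | x y. x \<in> X \<and> y \<in> Y} \<subseteq> P" using XY Neq P by blast
        moreover have "\<forall>X Y. X \<subseteq> A \<longrightarrow> Y \<subseteq> A \<longrightarrow>
        {bstar A pl cm e x y | x y. x \<in> X \<and> y \<in> Y} \<subseteq> P \<longrightarrow> X \<subseteq> P \<or> Y \<subseteq> P"
          using pp unfolding prime_ideal_def by (elim conjE)
        ultimately have "X \<subseteq> P \<or> Y \<subseteq> P" using X Y by simp
        moreover have "brace_ideal A pl cm e P" using pp unfolding prime_ideal_def by simp
        ultimately have "gen X \<subseteq> P \<or> gen Y \<subseteq> P" using gen_le by blast
        then show "P \<in> hull_H A pl cm e (gen X) \<union> hull_H A pl cm e (gen Y)"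
          using P by (auto simp: hull_H_def)
      qed
    qed (auto simp: hull_H_def)
    have c1: "spec_closed A pl cm e (hull_H A pl cm e (gen X))"
      unfolding spec_closed_def using gen_id[OF X] by blast
    have c2: "spec_closed A pl cm e (hull_H A pl cm e (gen Y))"
      unfolding spec_closed_def using gen_id[OF Y] by blast
    have s1: "hull_H A pl cm e (gen X) \<subseteq> ?S" "hull_H A pl cm e (gen Y) \<subseteq> ?S"
      by (auto simp: hull_H_def)
    have nn: "\<not> (\<exists>C1 C2. spec_closed A pl cm e C1 \<and> spec_closed A pl cm e C2 \<and>
              C1 \<subset> ?S \<and> C2 \<subset> ?S \<and> ?S = C1 \<union> C2)"
      using irr unfolding spec_irreducible_def by (elim conjE)
    have "hull_H A pl cm e (gen X) = ?S \<or> hull_H A pl cm e (gen Y) = ?S"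
    proof (rule ccontr)
      assume "\<not> ?thesis"
      then have "hull_H A pl cm e (gen X) \<subset> ?S" "hull_H A pl cm e (gen Y) \<subset> ?S"
        using s1 by auto
      then show False using nn c1 c2 cov by blast
    qed
    then show "X \<subseteq> ?N \<or> Y \<subseteq> ?N"
    proof
      assume "hull_H A pl cm e (gen X) = ?S"
      then have "\<forall>P\<in>?S. gen X \<subseteq> P" by (auto simp: hull_H_def)
      then show ?thesis using gen_sub X unfolding Nil_brace_def by blast
    next
      assume "hull_H A pl cm e (gen Y) = ?S"
      then have "\<forall>P\<in>?S. gen Y \<subseteq> P" by (auto simp: hull_H_def)
      then show ?thesis using gen_sub Y unfolding Nil_brace_def by blast
    qed
  qed
  then show "prime_ideal A pl cm e ?N" using Nid Nne unfolding prime_ideal_def by blast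
next
  assume pr: "prime_ideal A pl cm e (Nil_brace A pl cm e)"
  let ?S = "Spec A pl cm e"
  let ?N = "Nil_brace A pl cm e"
  have NS: "?N \<in> ?S" using pr by (simp add: Spec_def)
  have "\<not> (\<exists>C1 C2. spec_closed A pl cm e C1 \<and> spec_closed A pl cm e C2 \<and>
              C1 \<subset> ?S \<and> C2 \<subset> ?S \<and> ?S = C1 \<union> C2)"
  proof
    assume "\<exists>C1 C2. spec_closed A pl cm e C1 \<and> spec_closed A pl cm e C2 \<and>
              C1 \<subset> ?S \<and> C2 \<subset> ?S \<and> ?S = C1 \<union> C2"
    then obtain I J where C: "hull_H A pl cm e I \<subset> ?S" "hull_H A pl cm e J \<subset> ?S"
       "?S = hull_H A pl cm e I \<union> hull_H A pl cm e J"
      unfolding spec_closed_def by blast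
    have full: "hull_H A pl cm e K = ?S" if "K \<subseteq> ?N" for K
      using that unfolding hull_H_def Nil_brace_def by blast
    from NS C(3) have "?N \<in> hull_H A pl cm e I \<or> ?N \<in> hull_H A pl cm e J" by blast
    then have "I \<subseteq> ?N \<or> J \<subseteq> ?N" unfolding hull_H_def by blast
    then show False using full C(1,2) by auto
  qed
  then show "spec_irreducible A pl cm e" using NS unfolding spec_irreducible_def by blast
qed

end
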